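(* Let $a$ be a positive integer, let $G$ be a finite simple graph of arboricity at most $a$ containing no isolated edges, and let $\mathcal{G}\cong\mathcal{G}_1\times\mathcal{G}_2\times\cdots\times\mathcal{G}_a$ be an Abelian group that is a product of Abelian groups $\mathcal{G}_i$ with $|\mathcal{G}_i|\geq 4$ for $i=1,\ldots,a$. Then there exists a labeling $f\colon E(G)\to\mathcal{G}\setminus\{0\}$ such that $w_f(u)\neq w_f(v)$ for every edge $uv$ of $G$.
   Context: The arboricity of $G$ is the least number of forests into which $E(G)$ can be decomposed. An isolated edge is a connected component isomorphic to $K_2$. $w_f(v)=\sum_{u\in N(v)}f(uv)$, the sum in $\mathcal{G}$. *)

theory Defs
  imports "HOL-Algebra.Algebra"
begin

definition simple_graph :: "'v set \<Rightarrow> 'v set set \<Rightarrow> bool" where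
  "simple_graph V E \<longleftrightarrow> finite V \<and> (\<forall>e\<in>E. \<exists>u v. e = {u, v} \<and> u \<noteq> v \<and> u \<in> V \<and> v \<in> V)"

definition has_cycle :: "'v set set \<Rightarrow> bool" where
  "has_cycle F \<longleftrightarrow> (\<exists>vs. length vs \<ge> 3 \<and> distinct vs \<and>
      (\<forall>i < length vs - 1. {vs ! i, vs ! (i+1)} \<in> F) \<and> {last vs, hd vs} \<in> F)"

definition forest :: "'v set set \<Rightarrow> bool" where
  "forest F \<longleftrightarrow> \<not> has_cycle F"

definition forest_decomposable :: "'v set set \<Rightarrow> nat \<Rightarrow> bool" where
  "forest_decomposable E k \<longleftrightarrow> (\<exists>c :: 'v set \<Rightarrow> nat. (\<forall>e\<in>E. c e < k) \<and>
      (\<forall>i < k. forest {e \<in> E. c e = i}))"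

definition arboricity :: "'v set set \<Rightarrow> nat" where
  "arboricity E = (LEAST k. forest_decomposable E k)"

definition neighbors :: "'v set set \<Rightarrow> 'v \<Rightarrow> 'v set" where
  "neighbors E v = {u. {u, v} \<in> E}"

text \<open>An isolated edge: a component isomorphic to K2, i.e. an edge uv with
  N(u) = {v} and N(v) = {u}.\<close>
definition has_isolated_edge :: "'v set set \<Rightarrow> bool" where
  "has_isolated_edge E \<longleftrightarrow> (\<exists>u v. {u, v} \<in> E \<and> neighbors E u = {v} \<and> neighbors E v = {u})"

text \<open>Weighted degree w_f(v) = sum over neighbours u of f(uv), computed in the
  (multiplicatively written) abelian group G.\<close>
definition weight :: "('g, 'm) monoid_scheme \<Rightarrow> 'v set set \<Rightarrow> ('v set \<Rightarrow> 'g) \<Rightarrow> 'v \<Rightarrow> 'g" where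
  "weight G E f v = finprod G (\<lambda>u. f {u, v}) (neighbors E v)"

end

theory Submission
  imports Defs
begin

context comm_group begin

lemma avoid3:
  assumes c4: "4 \<le> card (carrier G)"
  shows "\<exists>z\<in>carrier G. z \<noteq> a \<and> z \<noteq> b \<and> z \<noteq> c"
proof -
  have fin: "finite (carrier G)" using c4 card.infinite by fastforce
  have "card (carrier G - {a,b,c}) \<ge> card (carrier G) - card {a,b,c}"
    by (rule diff_card_le_card_Diff) simp
  moreover have "card {a,b,c} \<le> 3" by (auto simp: card_insert_if)
  ultimately have "card (carrier G - {a,b,c}) > 0" using c4 by linarith
  then have "carrier G - {a,b,c} \<noteq> {}" by (metis card.empty less_irrefl)
  then show ?thesis by blast
qed

lemma eq_solve:
  assumes "a \<in> carrier G" "b \<in> carrier G" "c \<in> carrier G"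
  shows "(a \<otimes> b = c) = (b = inv a \<otimes> c)"
  using assms inv_solve_left by auto

lemma fp_split:
  assumes "finite C" "c \<in> C" "y \<in> C \<rightarrow> carrier G"
  shows "finprod G y C = y c \<otimes> finprod G y (C - {c})"
proof -
  have "C = insert c (C - {c})" using assms by auto
  then have "finprod G y C = finprod G y (insert c (C - {c}))" by simp
  also have "\<dots> = y c \<otimes> finprod G y (C - {c})"
    by (rule finprod_insert) (use assms in auto)
  finally show ?thesis .
qed

lemma pick_fun:
  assumes c4: "4 \<le> card (carrier G)"
  shows "\<exists>y. \<forall>c. y c \<in> carrier G \<and> y c \<noteq> \<one> \<and> y c \<noteq> bf c"
proof -
  have "\<forall>c. \<exists>z. z \<in> carrier G \<and> z \<noteq> \<one> \<and> z \<noteq> bf c" using avoid3[OF c4] by metis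
  then show ?thesis by metis
qed

lemma stepI:
  assumes c4: "4 \<le> card (carrier G)" and fin: "finite C" and c0: "c0 \<in> C"
    and A: "A \<in> carrier G" and P: "P \<in> carrier G"
  shows "\<exists>y. (\<forall>c\<in>C. y c \<in> carrier G \<and> y c \<noteq> \<one> \<and> y c \<noteq> bf c) \<and> A \<otimes> finprod G y C \<noteq> P"
proof -
  obtain y0 where y0: "\<forall>c. y0 c \<in> carrier G \<and> y0 c \<noteq> \<one> \<and> y0 c \<noteq> bf c"
    using pick_fun[OF c4, of bf] by (elim exE) simp
  define R where "R = finprod G y0 (C - {c0})"
  have R: "R \<in> carrier G" unfolding R_def by (rule finprod_closed) (use y0 in blast)
  obtain z where z: "z \<in> carrier G" "z \<noteq> \<one>" "z \<noteq> bf c0" "z \<noteq> inv (A \<otimes> R) \<otimes> P"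
    using avoid3[OF c4] by blast
  define y where "y = y0(c0 := z)"
  have yC: "y \<in> C \<rightarrow> carrier G" using y0 z by (auto simp: y_def)
  have "finprod G y C = y c0 \<otimes> finprod G y (C - {c0})" by (rule fp_split[OF fin c0 yC])
  moreover have "finprod G y (C - {c0}) = R" unfolding R_def
    by (rule finprod_cong) (use y0 in \<open>auto simp: y_def Pi_def\<close>)
  moreover have yc0: "y c0 = z" by (simp add: y_def)
  ultimately have fy: "finprod G y C = z \<otimes> R" by simp
  have "A \<otimes> (z \<otimes> R) \<noteq> P"
  proof
    assume "A \<otimes> (z \<otimes> R) = P"
    then have "(A \<otimes> R) \<otimes> z = P" using A R z by (simp add: m_ac)
    then have "z = inv (A \<otimes> R) \<otimes> P" using eq_solve A R z P by auto
    with z show False by simp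
  qed
  then show ?thesis using fy y0 z by (intro exI[of _ y]) (auto simp: y_def)
qed

lemma stepII:
  assumes c4: "4 \<le> card (carrier G)"
    and A: "A \<in> carrier G" and P: "P \<in> carrier G" and gl: "gl l \<in> carrier G"
    and ne: "A \<noteq> gl l"
  shows "\<exists>y. (\<forall>c\<in>{l}. y c \<in> carrier G \<and> y c \<noteq> \<one>) \<and>
     (\<forall>c\<in>{l}. gl c \<otimes> y c \<noteq> A \<otimes> finprod G y {l}) \<and> A \<otimes> finprod G y {l} \<noteq> P"
proof -
  obtain z where z: "z \<in> carrier G" "z \<noteq> \<one>" "z \<noteq> inv A \<otimes> P" "z \<noteq> \<one>"
    using avoid3[OF c4] by blast
  have fy: "finprod G (\<lambda>_. z) {l} = z" using z by simp
  have "gl l \<otimes> z \<noteq> A \<otimes> z" using ne z A gl by (metis r_cancel)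
  moreover have "A \<otimes> z \<noteq> P" using z A P eq_solve by auto
  ultimately show ?thesis using fy z by (intro exI[of _ "\<lambda>_. z"]) auto
qed

lemma stepIII:
  assumes c4: "4 \<le> card (carrier G)" and fin: "finite C" and l1: "l1 \<in> L" "L \<subseteq> C"
    and c2: "c2 \<in> C" "c2 \<noteq> l1"
    and A: "A \<in> carrier G" and gl: "\<forall>l\<in>L. gl l \<in> carrier G"
  shows "\<exists>y. (\<forall>c\<in>C. y c \<in> carrier G \<and> y c \<noteq> \<one>) \<and> (\<forall>c\<in>C-L. y c \<noteq> bf c) \<and>
     (\<forall>l\<in>L. gl l \<otimes> y l \<noteq> A \<otimes> finprod G y C) \<and> A \<otimes> finprod G y C = gl l1"
proof -
  define forb where "forb c = (if c \<in> L then inv (gl c) \<otimes> gl l1 else bf c)" for c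
  obtain y0 where y0: "\<forall>c. y0 c \<in> carrier G \<and> y0 c \<noteq> \<one> \<and> y0 c \<noteq> forb c"
    using pick_fun[OF c4, of forb] by (elim exE) simp
  define S where "S = C - {l1, c2}"
  define R where "R = finprod G y0 S"
  have R: "R \<in> carrier G" unfolding R_def by (rule finprod_closed) (use y0 in blast)
  have g1: "gl l1 \<in> carrier G" using gl l1 by blast
  obtain z where z: "z \<in> carrier G" "z \<noteq> \<one>" "z \<noteq> forb c2" "z \<noteq> inv (A \<otimes> R) \<otimes> gl l1"
    using avoid3[OF c4] by blast
  define w where "w = inv (A \<otimes> (z \<otimes> R)) \<otimes> gl l1"
  have w: "w \<in> carrier G" unfolding w_def using A z R g1 by simp
  have w1: "w \<noteq> \<one>"
  proof
    assume "w = \<one>"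
    then have "gl l1 = A \<otimes> (z \<otimes> R)" unfolding w_def using A z R g1
      by (metis inv_closed inv_equality m_closed r_inv)
    then have "(A \<otimes> R) \<otimes> z = gl l1" using A R z by (simp add: m_ac)
    then have "z = inv (A \<otimes> R) \<otimes> gl l1" using eq_solve A R z g1 by auto
    with z show False by simp
  qed
  define y where "y = y0(c2 := z, l1 := w)"
  have yC: "y \<in> C \<rightarrow> carrier G" using y0 z w by (auto simp: y_def)
  have l1C: "l1 \<in> C" using l1 by blast
  have "finprod G y C = y l1 \<otimes> finprod G y (C - {l1})" by (rule fp_split[OF fin l1C yC])
  moreover have "finprod G y (C - {l1}) = y c2 \<otimes> finprod G y (C - {l1} - {c2})"
    by (rule fp_split) (use fin c2 yC in auto)
  moreover have "finprod G y (C - {l1} - {c2}) = R" unfolding R_def S_def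
    by (rule finprod_cong) (use y0 in \<open>auto simp: y_def Pi_def\<close>)
  moreover have "y l1 = w" "y c2 = z" using c2 by (auto simp: y_def)
  ultimately have fy: "finprod G y C = w \<otimes> (z \<otimes> R)" by simp
  have W: "A \<otimes> finprod G y C = gl l1"
  proof -
    have "A \<otimes> finprod G y C = w \<otimes> (A \<otimes> (z \<otimes> R))" using fy A w z R by (simp add: m_ac)
    also have "\<dots> = gl l1" unfolding w_def using A z R g1
      by (metis inv_closed l_inv m_assoc m_closed m_comm r_one)
    finally show ?thesis .
  qed
  have leaf: "gl l \<otimes> y l \<noteq> gl l1" if l: "l \<in> L" for l
  proof (cases "l = l1")
    case True
    then show ?thesis using w1 g1 w by (simp add: y_def)
  next
    case False
    have glc: "gl l \<in> carrier G" using gl l by blast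
    have f: "forb l = inv (gl l) \<otimes> gl l1" using l by (simp add: forb_def)
    have "y l \<noteq> inv (gl l) \<otimes> gl l1"
    proof (cases "l = c2")
      case True
      then show ?thesis using False z f by (simp add: y_def)
    next
      case False2: False
      then show ?thesis using False y0 f by (simp add: y_def) (metis f)
    qed
    moreover have "y l \<in> carrier G" using yC l \<open>L \<subseteq> C\<close> by blast
    ultimately show ?thesis using eq_solve glc g1 by blast
  qed
  have mid: "y c \<noteq> bf c" if c: "c \<in> C - L" for c
  proof -
    have f: "forb c = bf c" using c by (simp add: forb_def)
    have "c \<noteq> l1" using c l1 by blast
    then show ?thesis using f y0 z by (cases "c = c2") (simp_all add: y_def, metis)
  qed
  have ne1: "\<forall>c\<in>C. y c \<noteq> \<one>" using y0 z w1 by (auto simp: y_def)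
  show ?thesis
    using yC W leaf mid ne1 by (intro exI[of _ y]) auto
qed

lemma exists_pow_avoid:
  assumes c4: "4 \<le> card (carrier G)" and D: "D \<in> carrier G" "D \<noteq> \<one>"
  shows "\<exists>t\<in>carrier G. t \<noteq> \<one> \<and> t [^] (n::nat) \<noteq> D"
proof -
  obtain t0 where t0: "t0 \<in> carrier G" "t0 \<noteq> \<one>" using avoid3[OF c4] by blast
  obtain t1 where t1: "t1 \<in> carrier G" "t1 \<noteq> \<one>" "t1 \<noteq> inv t0" using avoid3[OF c4] by blast
  have t01: "t0 \<otimes> t1 \<noteq> \<one>"
  proof
    assume "t0 \<otimes> t1 = \<one>"
    then have "t1 \<otimes> t0 = \<one>" using t0 t1 by (simp add: m_comm)
    then have "inv t0 = t1" using t0 t1 by (simp add: inv_equality)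
    with t1 show False by simp
  qed
  show ?thesis
  proof (cases "t0 [^] n = D \<and> t1 [^] n = D")
    case True
    have "(t0 \<otimes> t1) [^] n = D \<otimes> D" using True t0 t1 by (simp add: nat_pow_distrib)
    moreover have "D \<otimes> D \<noteq> D" using D by (metis l_one one_closed r_cancel)
    ultimately show ?thesis using t01 t0 t1 by (intro bexI[of _ "t0 \<otimes> t1"]) auto
  next
    case False
    then show ?thesis using t0 t1 by blast
  qed
qed

lemma pickM:
  assumes c4: "4 \<le> card (carrier G)" and fin: "finite M" and d: "\<delta> \<in> carrier G" "\<delta> \<noteq> \<one>"
  shows "\<exists>y. (\<forall>c\<in>M. y c \<in> carrier G \<and> y c \<noteq> \<one> \<and> y c \<noteq> bf c) \<and> finprod G y M \<noteq> \<delta>"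
proof (cases "M = {}")
  case True
  then show ?thesis using d by (intro exI[of _ "\<lambda>_. \<one>"]) simp
next
  case False
  then obtain c0 where "c0 \<in> M" by blast
  from stepI[OF c4 fin this one_closed d(1), where bf=bf] obtain y where
    y: "\<forall>c\<in>M. y c \<in> carrier G \<and> y c \<noteq> \<one> \<and> y c \<noteq> bf c" "\<one> \<otimes> finprod G y M \<noteq> \<delta>" by blast
  have "finprod G y M \<in> carrier G" by (rule finprod_closed) (use y in blast)
  then show ?thesis using y by (intro exI[of _ y]) simp
qed

lemma stepIV:
  assumes c4: "4 \<le> card (carrier G)" and fin: "finite C" and LC: "L \<subseteq> C" and lm: "lm \<in> L"
    and A: "A \<in> carrier G" and P: "P \<in> carrier G" and gl: "\<forall>l\<in>L. gl l = P" and AP: "A \<noteq> P"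
  shows "\<exists>y. (\<forall>c\<in>C. y c \<in> carrier G \<and> y c \<noteq> \<one>) \<and> (\<forall>c\<in>C-L. y c \<noteq> bf c) \<and>
     (\<forall>l\<in>L. gl l \<otimes> y l \<noteq> A \<otimes> finprod G y C) \<and> A \<otimes> finprod G y C \<noteq> P"
proof -
  define \<delta> where "\<delta> = inv A \<otimes> P"
  have d: "\<delta> \<in> carrier G" unfolding \<delta>_def using A P by simp
  have d1: "\<delta> \<noteq> \<one>" unfolding \<delta>_def using A P AP by (metis inv_closed inv_equality inv_inv)
  have finM: "finite (C - L)" using fin by simp
  obtain yM where yM: "\<forall>c\<in>C - L. yM c \<in> carrier G \<and> yM c \<noteq> \<one> \<and> yM c \<noteq> bf c"
      and yMd: "finprod G yM (C - L) \<noteq> \<delta>"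
    using pickM[OF c4 finM d d1] by blast
  define RM where "RM = finprod G yM (C - L)"
  have RM: "RM \<in> carrier G" unfolding RM_def by (rule finprod_closed) (use yM in blast)
  define D where "D = inv RM \<otimes> \<delta>"
  have D: "D \<in> carrier G" unfolding D_def using RM d by simp
  have D1: "D \<noteq> \<one>" unfolding D_def using RM d yMd RM_def by (metis inv_closed inv_equality inv_inv)
  define n where "n = card (L - {lm})"
  obtain t where t: "t \<in> carrier G" "t \<noteq> \<one>" "t [^] n \<noteq> D" using exists_pow_avoid[OF c4 D D1] by blast
  define Xv where "Xv = RM \<otimes> (t [^] (n::nat))"
  have Xv: "Xv \<in> carrier G" unfolding Xv_def using RM t by simp
  obtain s where s: "s \<in> carrier G" "s \<noteq> \<one>" "s \<noteq> inv Xv \<otimes> \<delta>" "s \<noteq> inv Xv \<otimes> \<delta> \<otimes> t"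
    using avoid3[OF c4] by blast
  define y where "y c = (if c \<in> L then (if c = lm then s else t) else yM c)" for c
  have yC: "y \<in> C \<rightarrow> carrier G" using yM s t by (auto simp: y_def)
  have finL: "finite L" using fin LC finite_subset by blast
  have "C = (C - L) \<union> L" using LC by blast
  then have "finprod G y C = finprod G y (C - L) \<otimes> finprod G y L"
    using finprod_Un_disjoint[of "C - L" L y] finM finL yC LC by (metis Diff_disjoint inf_commute Un_Diff_cancel2 Pi_anti_mono subsetD Diff_subset)
  moreover have "finprod G y (C - L) = RM" unfolding RM_def
    by (rule finprod_cong) (use yM in \<open>auto simp: y_def Pi_def\<close>)
  moreover have "finprod G y L = y lm \<otimes> finprod G y (L - {lm})"
    by (rule fp_split[OF finL lm]) (use yC LC in blast)
  moreover have "finprod G y (L - {lm}) = finprod G (\<lambda>_. t) (L - {lm})"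
    by (rule finprod_cong) (use t in \<open>auto simp: y_def Pi_def\<close>)
  moreover have "finprod G (\<lambda>_. t) (L - {lm}) = t [^] n" unfolding n_def using t by (simp add: finprod_const)
  moreover have "y lm = s" using lm by (simp add: y_def)
  ultimately have fy: "finprod G y C = Xv \<otimes> s" unfolding Xv_def using RM s t by (simp add: m_ac)
  have Wne: "A \<otimes> (Xv \<otimes> s) \<noteq> P"
  proof
    assume "A \<otimes> (Xv \<otimes> s) = P"
    then have "Xv \<otimes> s = \<delta>" unfolding \<delta>_def using eq_solve A Xv s P by simp
    then have "s = inv Xv \<otimes> \<delta>" using eq_solve Xv s d by simp
    with s show False by simp
  qed
  have leaf: "gl l \<otimes> y l \<noteq> A \<otimes> (Xv \<otimes> s)" if l: "l \<in> L" for l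
  proof (cases "l = lm")
    case True
    show ?thesis
    proof
      assume "gl l \<otimes> y l = A \<otimes> (Xv \<otimes> s)"
      then have "P \<otimes> s = (A \<otimes> Xv) \<otimes> s" using True gl l A Xv s by (simp add: y_def m_ac)
      then have "P = A \<otimes> Xv" using P A Xv s by (metis m_closed r_cancel)
      then have "Xv = \<delta>" unfolding \<delta>_def using A Xv by (simp add: m_assoc[symmetric])
      then have "t [^] n = D" unfolding Xv_def D_def using eq_solve RM t d by simp
      with t show False by simp
    qed
  next
    case False
    show ?thesis
    proof
      assume "gl l \<otimes> y l = A \<otimes> (Xv \<otimes> s)"
      then have "(A \<otimes> Xv) \<otimes> s = P \<otimes> t" using False gl l A Xv s by (simp add: y_def m_ac)
      then have "s = inv (A \<otimes> Xv) \<otimes> (P \<otimes> t)" using eq_solve A Xv s P t by simp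
      also have "\<dots> = inv Xv \<otimes> \<delta> \<otimes> t" unfolding \<delta>_def using A Xv P t
        by (simp add: inv_mult m_ac)
      finally show False using s by simp
    qed
  qed
  have mid: "y c \<noteq> bf c" if "c \<in> C - L" for c using that yM by (simp add: y_def)
  have "\<forall>c\<in>C. y c \<in> carrier G \<and> y c \<noteq> \<one>" using yM s t by (auto simp: y_def)
  then show ?thesis using fy Wne leaf mid by (intro exI[of _ y]) auto
qed

lemma local_step:
  assumes c4: "4 \<le> card (carrier G)" and fin: "finite C" and ne: "C \<noteq> {}" and LC: "L \<subseteq> C"
    and A: "A \<in> carrier G" and P: "P \<in> carrier G" and gl: "\<forall>l\<in>L. gl l \<in> carrier G"
    and HA: "L \<noteq> {} \<Longrightarrow> A \<noteq> gl (SOME l. l \<in> L)"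
  shows "\<exists>y. (\<forall>c\<in>C. y c \<in> carrier G \<and> y c \<noteq> \<one>) \<and> (\<forall>c\<in>C-L. y c \<noteq> bf c) \<and>
     (\<forall>l\<in>L. gl l \<otimes> y l \<noteq> A \<otimes> finprod G y C) \<and> A \<otimes> finprod G y C \<noteq> P"
proof (cases "L = {}")
  case True
  from ne obtain c0 where "c0 \<in> C" by blast
  from stepI[OF c4 fin this A P, of bf] True show ?thesis by auto
next
  case False
  then obtain l0 where l0: "l0 \<in> L" by blast
  show ?thesis
  proof (cases "C = {l0}")
    case True
    then have L: "L = {l0}" using LC l0 by blast
    then have ne0: "A \<noteq> gl l0" using HA by simp
    have "gl l0 \<in> carrier G" using gl l0 by blast
    from stepII[where gl=gl and l=l0, OF c4 A P this ne0] gl L True show ?thesis by auto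
  next
    case Cne: False
    then obtain c2 where c2: "c2 \<in> C" "c2 \<noteq> l0" using l0 LC by blast
    show ?thesis
    proof (cases "\<exists>l1\<in>L. gl l1 \<noteq> P")
      case True
      then obtain l1 where l1: "l1 \<in> L" "gl l1 \<noteq> P" by blast
      obtain c3 where c3: "c3 \<in> C" "c3 \<noteq> l1"
        using c2 l0 LC by (metis subsetD)
      from stepIII[OF c4 fin l1(1) LC c3 A gl, of bf] l1 show ?thesis by auto
    next
      case False
      then have allP: "\<forall>l\<in>L. gl l = P" by blast
      have "(SOME l. l \<in> L) \<in> L" using l0 by (metis someI)
      then have "A \<noteq> P" using HA allP \<open>L \<noteq> {}\<close> by metis
      from stepIV[OF c4 fin LC l0 A P allP this] show ?thesis .
    qed
  qed
qed

lemma root_step: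
  assumes c4: "4 \<le> card (carrier G)" and fin: "finite C" and ne: "C \<noteq> {}" and LC: "L \<subseteq> C"
    and A: "A \<in> carrier G" and gl: "\<forall>l\<in>L. gl l \<in> carrier G"
    and big: "C - L \<noteq> {} \<or> 2 \<le> card C"
  shows "\<exists>y. (\<forall>c\<in>C. y c \<in> carrier G \<and> y c \<noteq> \<one>) \<and> (\<forall>c\<in>C-L. y c \<noteq> bf c) \<and>
     (\<forall>l\<in>L. gl l \<otimes> y l \<noteq> A \<otimes> finprod G y C)"
proof (cases "L = {}")
  case True
  then show ?thesis using local_step[OF c4 fin ne LC A one_closed gl, of bf] by blast
next
  case False
  then obtain l1 where l1: "l1 \<in> L" by blast
  have "\<exists>c3. c3 \<in> C \<and> c3 \<noteq> l1"
  proof (cases "C - L = {}")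
    case True
    then have "2 \<le> card C" using big by simp
    then show ?thesis using l1 LC
      by (metis card_le_Suc0_iff_eq fin not_less_eq_eq numeral_2_eq_2)
  next
    case False
    then show ?thesis using l1 by blast
  qed
  then obtain c3 where "c3 \<in> C" "c3 \<noteq> l1" by blast
  from stepIII[OF c4 fin l1 LC this A gl, of bf] show ?thesis by blast
qed

end

definition wt :: "('g, 'm) monoid_scheme \<Rightarrow> 'v set set \<Rightarrow> ('v \<Rightarrow> 'g) \<Rightarrow> ('v set \<Rightarrow> 'g) \<Rightarrow> 'v \<Rightarrow> 'g" where
  "wt K F g x v = g v \<otimes>\<^bsub>K\<^esub> finprod K (\<lambda>u. x {u, v}) (neighbors F v)"

definition isol :: "'v set set \<Rightarrow> 'v \<Rightarrow> 'v \<Rightarrow> bool" where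
  "isol F u v \<longleftrightarrow> neighbors F u = {v} \<and> neighbors F v = {u}"

definition sgraph :: "'v set set \<Rightarrow> bool" where
  "sgraph F \<longleftrightarrow> (\<forall>e\<in>F. \<exists>u v. e = {u, v} \<and> u \<noteq> v)"

definition ispath :: "'v set set \<Rightarrow> 'v list \<Rightarrow> bool" where
  "ispath F vs \<longleftrightarrow> vs \<noteq> [] \<and> distinct vs \<and> (\<forall>i < length vs - 1. {vs ! i, vs ! Suc i} \<in> F)"

definition pconn :: "'v set set \<Rightarrow> 'v \<Rightarrow> 'v \<Rightarrow> bool" where
  "pconn F a b \<longleftrightarrow> (\<exists>vs. ispath F vs \<and> hd vs = a \<and> last vs = b)"

lemma sgraph_loop: "sgraph F \<Longrightarrow> {u, u} \<notin> F"
  unfolding sgraph_def by (metis doubleton_eq_iff)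

lemma sgraph_mono: "sgraph F \<Longrightarrow> F' \<subseteq> F \<Longrightarrow> sgraph F'"
  unfolding sgraph_def by blast

lemma has_cycle_mono: "has_cycle F' \<Longrightarrow> F' \<subseteq> F \<Longrightarrow> has_cycle F"
  unfolding has_cycle_def by blast

lemma pconn_mono: "pconn F' a b \<Longrightarrow> F' \<subseteq> F \<Longrightarrow> pconn F a b"
  unfolding pconn_def ispath_def by blast

lemma triangle_cycle:
  assumes "{a, b} \<in> F" "{b, c} \<in> F" "{c, a} \<in> F" "a \<noteq> b" "b \<noteq> c" "a \<noteq> c"
  shows "has_cycle F"
  unfolding has_cycle_def
proof (intro exI[of _ "[a, b, c]"] conjI)
  show "\<forall>i<length [a, b, c] - 1. {[a, b, c] ! i, [a, b, c] ! (i + 1)} \<in> F"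
  proof (intro allI impI)
    fix i assume "i < length [a, b, c] - 1"
    then have "i = 0 \<or> i = 1" by auto
    then show "{[a, b, c] ! i, [a, b, c] ! (i + 1)} \<in> F" using assms by auto
  qed
qed (use assms in auto)

lemma pconn_path2:
  assumes "{a, b} \<in> F" "{b, c} \<in> F" "a \<noteq> b" "b \<noteq> c" "a \<noteq> c"
  shows "pconn F a c"
  unfolding pconn_def ispath_def
proof (intro exI[of _ "[a, b, c]"] conjI)
  show "\<forall>i<length [a, b, c] - 1. {[a, b, c] ! i, [a, b, c] ! Suc i} \<in> F"
  proof (intro allI impI)
    fix i assume "i < length [a, b, c] - 1"
    then have "i = 0 \<or> i = 1" by auto
    then show "{[a, b, c] ! i, [a, b, c] ! Suc i} \<in> F" using assms by auto
  qed
qed (use assms in auto)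

lemma pconn_edge:
  assumes "{a, b} \<in> F" "a \<noteq> b"
  shows "pconn F a b"
  unfolding pconn_def ispath_def
  by (rule exI[of _ "[a, b]"]) (use assms in auto)

lemma pconn_sym:
  assumes "pconn F a b" shows "pconn F b a"
proof -
  obtain vs where vs: "ispath F vs" "hd vs = a" "last vs = b" using assms unfolding pconn_def by blast
  have "ispath F (rev vs)"
    unfolding ispath_def
  proof (intro conjI allI impI)
    show "rev vs \<noteq> []" "distinct (rev vs)" using vs unfolding ispath_def by auto
    fix i assume i: "i < length (rev vs) - 1"
    define j where "j = length vs - 2 - i"
    have j: "j < length vs - 1" using i unfolding j_def by simp
    have "rev vs ! i = vs ! Suc j" using i unfolding j_def by (simp add: rev_nth Suc_diff_Suc)
    moreover have "rev vs ! Suc i = vs ! j" using i unfolding j_def by (simp add: rev_nth)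
    ultimately show "{rev vs ! i, rev vs ! Suc i} \<in> F" using vs j unfolding ispath_def
      by (metis insert_commute)
  qed
  moreover have "hd (rev vs) = b" "last (rev vs) = a" using vs unfolding ispath_def
    by (auto simp: hd_rev last_rev)
  ultimately show ?thesis unfolding pconn_def by blast
qed

lemma path_vertex_in_edge:
  assumes "ispath F vs" "2 \<le> length vs" "w \<in> set vs"
  shows "\<exists>e\<in>F. w \<in> e"
proof -
  obtain i where i: "i < length vs" "vs ! i = w" using assms(3) by (metis in_set_conv_nth)
  show ?thesis
  proof (cases "i < length vs - 1")
    case True
    then show ?thesis using assms(1) i unfolding ispath_def by blast
  next
    case False
    then have "i - 1 < length vs - 1" "Suc (i - 1) = i" using i assms(2) by auto
    then show ?thesis using assms(1) i unfolding ispath_def by (metis insertI2 singletonI)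
  qed
qed

lemma path_cons:
  assumes p: "ispath F' vs" and hd: "hd vs = a" and last: "last vs = b" and ab: "a \<noteq> b"
    and sub: "F' \<subseteq> F" and nr: "\<forall>e\<in>F'. r \<notin> e" and ra: "{r, a} \<in> F"
  shows "pconn F r b" and "{b, r} \<in> F \<Longrightarrow> has_cycle F"
proof -
  have ne: "vs \<noteq> []" using p unfolding ispath_def by simp
  have len: "2 \<le> length vs"
  proof (rule ccontr)
    assume "\<not> 2 \<le> length vs"
    then have "length vs = 1" using ne by (cases vs) (auto simp: Suc_le_eq)
    then have "hd vs = last vs" by (cases vs) auto
    then show False using hd last ab by simp
  qed
  have rn: "r \<notin> set vs" using path_vertex_in_edge[OF p len] nr by blast
  have pr: "ispath F (r # vs)"
    unfolding ispath_def
  proof (intro conjI allI impI)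
    show "r # vs \<noteq> []" by simp
    show "distinct (r # vs)" using rn p unfolding ispath_def by simp
    fix i assume i: "i < length (r # vs) - 1"
    show "{(r # vs) ! i, (r # vs) ! Suc i} \<in> F"
    proof (cases i)
      case 0
      then show ?thesis using ra hd ne by (simp add: hd_conv_nth)
    next
      case (Suc j)
      then have "j < length vs - 1" using i by simp
      then show ?thesis using p sub Suc unfolding ispath_def by auto
    qed
  qed
  show "pconn F r b" unfolding pconn_def using pr last ne by (intro exI[of _ "r # vs"]) auto
  assume br: "{b, r} \<in> F"
  show "has_cycle F" unfolding has_cycle_def
    using pr len br last ne unfolding ispath_def by (intro exI[of _ "r # vs"]) auto
qed

lemma fin_nb:
  assumes "finite F" "sgraph F"
  shows "finite (neighbors F v)"
proof -
  have "neighbors F v \<subseteq> \<Union>F" unfolding neighbors_def by blast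
  moreover have "finite (\<Union>F)" using assms unfolding sgraph_def by (metis finite.emptyI finite.insertI finite_Union)
  ultimately show ?thesis by (rule finite_subset)
qed

context comm_group begin

lemma wt_closed:
  assumes "\<forall>v. g v \<in> carrier G" "\<forall>e\<in>F. x e \<in> carrier G"
  shows "wt G F g x v \<in> carrier G"
proof -
  have "(\<lambda>u. x {u, v}) \<in> neighbors F v \<rightarrow> carrier G" using assms unfolding neighbors_def by auto
  then show ?thesis unfolding wt_def using assms by simp
qed

lemma claim:
  assumes c4: "4 \<le> card (carrier G)"
  shows "finite F \<Longrightarrow> sgraph F \<Longrightarrow> \<not> has_cycle F \<Longrightarrow> (\<forall>r\<in>R. neighbors F r \<noteq> {}) \<Longrightarrow>
    (\<forall>a\<in>R. \<forall>b\<in>R. a \<noteq> b \<longrightarrow> \<not> pconn F a b) \<Longrightarrow>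
    (\<forall>r\<in>R. (\<exists>d. d \<in> neighbors F r \<and> neighbors F d = {r}) \<longrightarrow>
        g r \<noteq> g (SOME d. d \<in> neighbors F r \<and> neighbors F d = {r})) \<Longrightarrow>
    (\<forall>v. g v \<in> carrier G) \<Longrightarrow> (\<forall>v\<in>R. P v \<in> carrier G) \<Longrightarrow>
    \<exists>x. (\<forall>e\<in>F. x e \<in> carrier G \<and> x e \<noteq> \<one>) \<and>
        (\<forall>u v. {u, v} \<in> F \<longrightarrow> \<not> isol F u v \<longrightarrow> wt G F g x u \<noteq> wt G F g x v) \<and>
        (\<forall>r\<in>R. wt G F g x r \<noteq> P r)"
proof (induction "card F" arbitrary: F R g P rule: less_induct)
  case less
  note finF = less.prems(1) and sgF = less.prems(2) and acyc = less.prems(3)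
    and degR = less.prems(4) and indep = less.prems(5) and badR = less.prems(6)
    and gC = less.prems(7) and PC = less.prems(8)
  show ?case
  proof (cases "F = {}")
    case True
    then have "R = {}" using degR unfolding neighbors_def by auto
    then show ?thesis using True by (intro exI[of _ "\<lambda>_. \<one>"]) auto
  next
    case False
    obtain r where rchoice: "(r \<in> R) \<or> (R = {} \<and> neighbors F r \<noteq> {})"
    proof (cases "R = {}")
      case True
      obtain e where e: "e \<in> F" using False by blast
      then obtain u v where uv: "e = {u, v}" using sgF unfolding sgraph_def by blast
      have "u \<in> neighbors F v" using e uv unfolding neighbors_def by simp
      then have "neighbors F v \<noteq> {}" by blast
      then show ?thesis using True by (intro that[of v]) simp
    next
      case False
      then obtain r where "r \<in> R" by blast
      then show ?thesis by (intro that[of r] disjI1)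
    qed
    have Cne: "neighbors F r \<noteq> {}" using rchoice degR by blast
    define C where "C = neighbors F r"
    define L where "L = {c \<in> C. neighbors F c = {r}}"
    define M where "M = C - L"
    define F' where "F' = {e \<in> F. r \<notin> e}"
    have loop: "\<And>u. {u, u} \<notin> F" using sgraph_loop[OF sgF] .
    have rC: "r \<notin> C" unfolding C_def neighbors_def using loop by simp
    have memC: "\<And>c. c \<in> C \<longleftrightarrow> {r, c} \<in> F" unfolding C_def neighbors_def by (simp add: insert_commute)
    have finC: "finite C" unfolding C_def using fin_nb[OF finF sgF] .
    have LC: "L \<subseteq> C" unfolding L_def by blast
    have subF: "F' \<subseteq> F" unfolding F'_def by blast
    have nrF': "\<forall>e\<in>F'. r \<notin> e" unfolding F'_def by blast
    have N1: "\<And>v. v \<noteq> r \<Longrightarrow> neighbors F' v = neighbors F v - {r}"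
      unfolding F'_def neighbors_def by auto
    have N2: "neighbors F' r = {}" unfolding F'_def neighbors_def by auto
    have N3: "\<And>v. v \<noteq> r \<Longrightarrow> v \<notin> C \<Longrightarrow> neighbors F' v = neighbors F v"
    proof -
      fix v assume v: "v \<noteq> r" "v \<notin> C"
      have "r \<notin> neighbors F v" using memC v unfolding neighbors_def by (simp add: insert_commute)
      then show "neighbors F' v = neighbors F v" using N1 v by auto
    qed
    have N4: "\<And>c. c \<in> C \<Longrightarrow> neighbors F c = insert r (neighbors F' c)"
    proof -
      fix c assume c: "c \<in> C"
      have "c \<noteq> r" using c rC by blast
      moreover have "r \<in> neighbors F c" using memC c unfolding neighbors_def by (simp add: insert_commute)
      ultimately show "neighbors F c = insert r (neighbors F' c)" using N1 by auto
    qed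
    have N5: "\<And>v. r \<notin> neighbors F' v" unfolding F'_def neighbors_def by auto
    have tri: "\<And>c d. c \<in> C \<Longrightarrow> d \<in> C \<Longrightarrow> {c, d} \<notin> F"
    proof
      fix c d assume c: "c \<in> C" and d: "d \<in> C" and cd: "{c, d} \<in> F"
      have "c \<noteq> d" using cd loop by auto
      moreover have "r \<noteq> c" "r \<noteq> d" using c d rC by auto
      ultimately have "has_cycle F"
        using triangle_cycle[of r c F d] c d cd memC by (auto simp: insert_commute)
      then show False using acyc by simp
    qed
    have finF': "finite F'" using finF subF finite_subset by blast
    have sgF': "sgraph F'" using sgraph_mono[OF sgF subF] .
    have acyc': "\<not> has_cycle F'" using acyc has_cycle_mono[OF _ subF] by blast
    obtain c0 where c0: "c0 \<in> C" using Cne unfolding C_def by blast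
    have cardlt: "card F' < card F"
    proof (rule psubset_card_mono[OF finF])
      have "{r, c0} \<in> F" "{r, c0} \<notin> F'" using c0 memC unfolding F'_def by auto
      then show "F' \<subset> F" using subF by blast
    qed
    have RnotC: "v \<notin> C" if v: "v \<in> R" "v \<noteq> r" for v
    proof
      assume vC: "v \<in> C"
      have "{r, v} \<in> F" using memC[of v] vC by simp
      then have pc: "pconn F r v" using v(2) by (intro pconn_edge) auto
      have rR: "r \<in> R" using rchoice v(1) by blast
      have "r \<noteq> v" using v(2) by simp
      then have "\<not> pconn F r v" using indep rR v(1) by simp
      then show False using pc by simp
    qed
    define bf where "bf c = inv (g c) \<otimes> g (SOME d. d \<in> neighbors F' c \<and> neighbors F' d = {c})" for c
    define A where "A = g r"
    have A: "A \<in> carrier G" unfolding A_def using gC by blast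
    have glC: "\<forall>l\<in>L. g l \<in> carrier G" using gC by blast
    have CneC: "C \<noteq> {}" using Cne unfolding C_def .
    obtain y where yC: "\<forall>c\<in>C. y c \<in> carrier G \<and> y c \<noteq> \<one>" and yM: "\<forall>c\<in>C-L. y c \<noteq> bf c"
      and yL: "\<forall>l\<in>L. \<not> isol F r l \<longrightarrow> g l \<otimes> y l \<noteq> A \<otimes> finprod G y C"
      and yR: "r \<in> R \<longrightarrow> A \<otimes> finprod G y C \<noteq> P r"
    proof (cases "r \<in> R")
      case True
      have HA: "A \<noteq> g (SOME l. l \<in> L)" if "L \<noteq> {}"
      proof -
        have "\<exists>d. d \<in> neighbors F r \<and> neighbors F d = {r}" using that unfolding L_def C_def by blast
        then have "g r \<noteq> g (SOME d. d \<in> neighbors F r \<and> neighbors F d = {r})" using badR True by simp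
        moreover have "(\<lambda>l. l \<in> L) = (\<lambda>d. d \<in> neighbors F r \<and> neighbors F d = {r})"
          unfolding L_def C_def by auto
        ultimately show ?thesis unfolding A_def by simp
      qed
      have PrC: "P r \<in> carrier G" using PC True by simp
      obtain y where y1: "\<forall>c\<in>C. y c \<in> carrier G \<and> y c \<noteq> \<one>" and y2: "\<forall>c\<in>C-L. y c \<noteq> bf c"
        and y3: "\<forall>l\<in>L. g l \<otimes> y l \<noteq> A \<otimes> finprod G y C" and y4: "A \<otimes> finprod G y C \<noteq> P r"
        using local_step[OF c4 finC CneC LC A PrC glC HA, of bf] by auto
      show ?thesis by (rule that[of y]) (use y1 y2 y3 y4 in auto)
    next
      case rR: False
      show ?thesis
      proof (cases "C - L \<noteq> {} \<or> 2 \<le> card C")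
        case True
        obtain y where y1: "\<forall>c\<in>C. y c \<in> carrier G \<and> y c \<noteq> \<one>" and y2: "\<forall>c\<in>C-L. y c \<noteq> bf c"
          and y3: "\<forall>l\<in>L. g l \<otimes> y l \<noteq> A \<otimes> finprod G y C"
          using root_step[OF c4 finC CneC LC A glC True, of bf] by auto
        show ?thesis by (rule that[of y]) (use y1 y2 y3 rR in auto)
      next
        case False
        then have CL: "C = L" and c1: "card C \<le> 1" using LC by auto
        have Cs: "C = {c0}"
        proof -
          have "card C = 1" using c1 CneC finC by (metis card_0_eq le_neq_implies_less less_one)
          then obtain a where "C = {a}" by (metis card_1_singletonE)
          then show ?thesis using c0 by simp
        qed
        then have "neighbors F c0 = {r}" using CL unfolding L_def by auto
        then have iso: "isol F r c0" unfolding isol_def using Cs C_def by simp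
        obtain z where z: "z \<in> carrier G" "z \<noteq> \<one>" "z \<noteq> \<one>" "z \<noteq> \<one>" using avoid3[OF c4] by blast
        show ?thesis
        proof (rule that[of "\<lambda>_. z"])
          show "\<forall>c\<in>C. z \<in> carrier G \<and> z \<noteq> \<one>" using z by simp
          show "\<forall>c\<in>C-L. z \<noteq> bf c" using CL by simp
          show "\<forall>l\<in>L. \<not> isol F r l \<longrightarrow> g l \<otimes> z \<noteq> A \<otimes> finprod G (\<lambda>_. z) C"
            using iso CL Cs by (metis singletonD)
          show "r \<in> R \<longrightarrow> A \<otimes> finprod G (\<lambda>_. z) C \<noteq> P r" using rR by simp
        qed
      qed
    qed
    define W where "W = A \<otimes> finprod G y C"
    have yPi: "y \<in> C \<rightarrow> carrier G" using yC by blast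
    have WC: "W \<in> carrier G" unfolding W_def using A yPi by simp
    define g' where "g' v = (if v \<in> C then g v \<otimes> y v else g v)" for v
    define R' where "R' = (R - {r}) \<union> M"
    define P' where "P' v = (if v \<in> M then W else P v)" for v
    have gC': "\<forall>v. g' v \<in> carrier G" using gC yC unfolding g'_def by auto
    have MC: "M \<subseteq> C" unfolding M_def by blast
    have rinR: "r \<in> R" if "v \<in> R" for v using rchoice that by blast
    have deg': "\<forall>v\<in>R'. neighbors F' v \<noteq> {}"
    proof
      fix v assume v: "v \<in> R'"
      show "neighbors F' v \<noteq> {}"
      proof (cases "v \<in> M")
        case True
        then have vC: "v \<in> C" and vL: "v \<notin> L" unfolding M_def by auto
        then have "neighbors F v \<noteq> {r}" unfolding L_def by simp
        moreover have "r \<in> neighbors F v" using N4[OF vC] by simp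
        ultimately obtain d where d: "d \<in> neighbors F v" "d \<noteq> r" by blast
        have "v \<noteq> r" using vC rC by blast
        then show ?thesis using N1[of v] d by auto
      next
        case False
        then have vR: "v \<in> R" "v \<noteq> r" using v unfolding R'_def by auto
        then have "v \<notin> C" using RnotC by simp
        then show ?thesis using N3 vR degR by simp
      qed
    qed
    have keyM: "pconn F r b \<and> ({b, r} \<in> F \<longrightarrow> has_cycle F)"
      if a: "a \<in> M" and p: "pconn F' a b" and ab: "a \<noteq> b" for a b
    proof -
      obtain vs where vs: "ispath F' vs" "hd vs = a" "last vs = b" using p unfolding pconn_def by blast
      have ra: "{r, a} \<in> F" using a MC memC by blast
      show ?thesis using path_cons[OF vs ab subF nrF' ra] by blast
    qed
    have indep': "\<forall>a\<in>R'. \<forall>b\<in>R'. a \<noteq> b \<longrightarrow> \<not> pconn F' a b"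
    proof (intro ballI impI notI)
      fix a b assume a: "a \<in> R'" and b: "b \<in> R'" and ab: "a \<noteq> b" and p: "pconn F' a b"
      show False
      proof (cases "a \<in> M")
        case aM: True
        show False
        proof (cases "b \<in> M")
          case True
          have "{b, r} \<in> F" using True MC memC by (auto simp: insert_commute)
          then have "has_cycle F" using keyM[OF aM p ab] by simp
          then show False using acyc by simp
        next
          case False
          then have bR: "b \<in> R" "b \<noteq> r" using b unfolding R'_def by auto
          have "pconn F r b" using keyM[OF aM p ab] by simp
          moreover have "r \<in> R" using rinR[OF bR(1)] .
          moreover have "r \<noteq> b" using bR by simp
          ultimately show False using indep bR(1) by simp
        qed
      next
        case aM: False
        then have aR: "a \<in> R" "a \<noteq> r" using a unfolding R'_def by auto
        show False
        proof (cases "b \<in> M")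
          case True
          have "pconn F r a" using keyM[OF True pconn_sym[OF p]] ab by simp
          moreover have "r \<in> R" using rinR[OF aR(1)] .
          moreover have "r \<noteq> a" using aR by simp
          ultimately show False using indep aR(1) by simp
        next
          case False
          then have bR: "b \<in> R" using b unfolding R'_def by auto
          have "pconn F a b" using pconn_mono[OF p subF] .
          then show False using indep aR(1) bR ab by simp
        qed
      qed
    qed
    have bad': "\<forall>v\<in>R'. (\<exists>d. d \<in> neighbors F' v \<and> neighbors F' d = {v}) \<longrightarrow>
        g' v \<noteq> g' (SOME d. d \<in> neighbors F' v \<and> neighbors F' d = {v})"
    proof (intro ballI impI)
      fix v assume v: "v \<in> R'" and ex: "\<exists>d. d \<in> neighbors F' v \<and> neighbors F' d = {v}"
      define d0 where "d0 = (SOME d. d \<in> neighbors F' v \<and> neighbors F' d = {v})"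
      have d0: "d0 \<in> neighbors F' v" "neighbors F' d0 = {v}"
        using someI_ex[OF ex] unfolding d0_def by auto
      show "g' v \<noteq> g' (SOME d. d \<in> neighbors F' v \<and> neighbors F' d = {v})"
        unfolding d0_def[symmetric]
      proof (cases "v \<in> M")
        case True
        then have vC: "v \<in> C" using MC by blast
        have d0r: "d0 \<noteq> r" using d0(1) N5 by blast
        have "d0 \<in> neighbors F v" using d0(1) N4[OF vC] by simp
        then have "{d0, v} \<in> F" unfolding neighbors_def by simp
        then have d0C: "d0 \<notin> C" using tri vC by blast
        have "y v \<noteq> inv (g v) \<otimes> g d0" using yM True unfolding M_def bf_def d0_def by simp
        then have "g v \<otimes> y v \<noteq> g d0" using eq_solve gC yC vC by simp
        then show "g' v \<noteq> g' d0" unfolding g'_def using vC d0C by simp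
      next
        case False
        then have vR: "v \<in> R" "v \<noteq> r" using v unfolding R'_def by auto
        have vC: "v \<notin> C" using RnotC vR by simp
        have rR: "r \<in> R" using rinR[OF vR(1)] .
        have nbv: "neighbors F' v = neighbors F v" using N3 vR vC by simp
        have dC: "d \<notin> C \<and> d \<noteq> r" if d: "d \<in> neighbors F v" for d
        proof
          have dv: "{d, v} \<in> F" using d unfolding neighbors_def by simp
          show dr: "d \<noteq> r" using dv vC memC by (auto simp: insert_commute)
          show "d \<notin> C"
          proof
            assume "d \<in> C"
            then have "{r, d} \<in> F" using memC by simp
            moreover have "{d, v} \<in> F" using dv .
            moreover have "d \<noteq> v" using dv loop by auto
            ultimately have "pconn F r v" using pconn_path2[of r d F v] dr vR by auto
            then show False using indep rR vR by simp
          qed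
        qed
        have same: "(\<lambda>d. d \<in> neighbors F' v \<and> neighbors F' d = {v}) = (\<lambda>d. d \<in> neighbors F v \<and> neighbors F d = {v})"
        proof
          fix d
          show "(d \<in> neighbors F' v \<and> neighbors F' d = {v}) = (d \<in> neighbors F v \<and> neighbors F d = {v})"
          proof (cases "d \<in> neighbors F v")
            case True
            then have "neighbors F' d = neighbors F d" using dC[OF True] N3 by simp
            then show ?thesis using nbv by simp
          next
            case False
            then show ?thesis using nbv by simp
          qed
        qed
        have exF: "\<exists>d. d \<in> neighbors F v \<and> neighbors F d = {v}" using ex same by metis
        have "g v \<noteq> g (SOME d. d \<in> neighbors F v \<and> neighbors F d = {v})" using badR vR(1) exF by simp
        then have "g v \<noteq> g d0" unfolding d0_def same .
        moreover have "d0 \<notin> C" using dC d0(1) nbv by simp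
        ultimately show "g' v \<noteq> g' d0" unfolding g'_def using vC by simp
      qed
    qed
    have PC': "\<forall>v\<in>R'. P' v \<in> carrier G"
      unfolding P'_def R'_def using WC PC by auto
    obtain x' where x'C: "\<forall>e\<in>F'. x' e \<in> carrier G \<and> x' e \<noteq> \<one>"
      and x'good: "\<forall>u v. {u, v} \<in> F' \<longrightarrow> \<not> isol F' u v \<longrightarrow> wt G F' g' x' u \<noteq> wt G F' g' x' v"
      and x'R: "\<forall>v\<in>R'. wt G F' g' x' v \<noteq> P' v"
      using less.hyps[OF cardlt finF' sgF' acyc' deg' indep' bad' gC' PC'] by auto
    define x where "x e = (if r \<in> e then y (the_elem (e - {r})) else x' e)" for e
    have X1: "x {u, v} = x' {u, v}" if "u \<noteq> r" "v \<noteq> r" for u v using that unfolding x_def by simp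
    have X2: "x {c, r} = y c" if "c \<noteq> r" for c
    proof -
      have "{c, r} - {r} = {c}" using that by auto
      then show ?thesis unfolding x_def by simp
    qed
    have X2': "x {r, c} = y c" if "c \<noteq> r" for c using X2[OF that] by (simp add: insert_commute)
    have W1: "wt G F g x v = wt G F' g' x' v" if vr: "v \<noteq> r" for v
    proof -
      have fin': "finite (neighbors F' v)" using fin_nb[OF finF' sgF'] .
      have x'Pi: "(\<lambda>u. x' {u, v}) \<in> neighbors F' v \<rightarrow> carrier G" using x'C unfolding neighbors_def by auto
      have agree: "x {u, v} = x' {u, v}" if u: "u \<in> neighbors F' v" for u
      proof -
        have "u \<noteq> r" using N5 u by metis
        then show ?thesis using X1 vr by simp
      qed
      have xPi: "(\<lambda>u. x {u, v}) \<in> neighbors F' v \<rightarrow> carrier G"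
        using x'Pi agree by (auto simp: Pi_def)
      have eq': "finprod G (\<lambda>u. x {u, v}) (neighbors F' v) = finprod G (\<lambda>u. x' {u, v}) (neighbors F' v)"
        by (rule finprod_cong) (use x'Pi agree in \<open>auto simp: Pi_def\<close>)
      have P'C: "finprod G (\<lambda>u. x' {u, v}) (neighbors F' v) \<in> carrier G" using x'Pi by simp
      show ?thesis
      proof (cases "v \<in> C")
        case True
        have yv: "y v \<in> carrier G" using yC True by blast
        have "finprod G (\<lambda>u. x {u, v}) (neighbors F v) = x {r, v} \<otimes> finprod G (\<lambda>u. x {u, v}) (neighbors F' v)"
          unfolding N4[OF True] using fin' N5 xPi X2'[OF vr] yv by (subst finprod_insert) auto
        also have "\<dots> = y v \<otimes> finprod G (\<lambda>u. x' {u, v}) (neighbors F' v)" using X2'[OF vr] eq' by simp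
        finally show ?thesis unfolding wt_def g'_def using True gC yv P'C by (simp add: m_assoc)
      next
        case False
        then show ?thesis unfolding wt_def g'_def using N3[OF vr False] eq' by simp
      qed
    qed
    have W2: "wt G F g x r = W"
    proof -
      have agreeC: "x {u, r} = y u" if u: "u \<in> C" for u
      proof -
        have "u \<noteq> r" using rC u by metis
        then show ?thesis using X2 by simp
      qed
      have "finprod G (\<lambda>u. x {u, r}) C = finprod G y C"
        by (rule finprod_cong) (use yPi agreeC in \<open>auto simp: Pi_def\<close>)
      then show ?thesis unfolding wt_def W_def A_def C_def by simp
    qed
    have labels: "\<forall>e\<in>F. x e \<in> carrier G \<and> x e \<noteq> \<one>"
    proof
      fix e assume e: "e \<in> F"
      show "x e \<in> carrier G \<and> x e \<noteq> \<one>"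
      proof (cases "r \<in> e")
        case True
        obtain u v where uv: "e = {u, v}" "u \<noteq> v" using e sgF unfolding sgraph_def by blast
        obtain c where c: "e = {c, r}" "c \<noteq> r" using True uv by auto
        then have "c \<in> C" using memC e by (simp add: insert_commute)
        then show ?thesis using c X2 yC by simp
      next
        case False
        then have "e \<in> F'" unfolding F'_def using e by simp
        then show ?thesis using x'C False unfolding x_def by simp
      qed
    qed
    have goodr: "wt G F g x r \<noteq> wt G F g x c" if c: "{c, r} \<in> F" "\<not> isol F r c" for c
    proof -
      have cC: "c \<in> C" using c memC by (simp add: insert_commute)
      have cr: "c \<noteq> r" using cC rC by blast
      show ?thesis
      proof (cases "c \<in> M")
        case True
        have "c \<in> R'" unfolding R'_def using True by simp
        then have "wt G F' g' x' c \<noteq> W" using x'R True unfolding P'_def by auto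
        then show ?thesis using W1[OF cr] W2 by simp
      next
        case False
        then have cL: "c \<in> L" using cC unfolding M_def by simp
        then have nc: "neighbors F c = {r}" unfolding L_def by simp
        have "wt G F g x c = g c \<otimes> y c"
          unfolding wt_def nc using X2'[OF cr] yC cC by simp
        moreover have "g c \<otimes> y c \<noteq> W" using yL cL c(2) unfolding W_def by simp
        ultimately show ?thesis using W2 by simp
      qed
    qed
    have good': "wt G F' g' x' u \<noteq> wt G F' g' x' v"
      if uv: "{u, v} \<in> F'" "isol F' u v" "u \<in> C" for u v
    proof -
      have nu: "neighbors F' u = {v}" and nv: "neighbors F' v = {u}" using uv(2) unfolding isol_def by auto
      have uvF: "{u, v} \<in> F" using uv(1) subF by blast
      have vC: "v \<notin> C" using tri uv(3) uvF by blast
      have vr: "v \<noteq> r" using nu N5 by blast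
      have "neighbors F u \<noteq> {r}" using N4[OF uv(3)] nu vr by auto
      then have uM: "u \<in> M" using uv(3) unfolding M_def L_def by simp
      have "(SOME d. d \<in> neighbors F' u \<and> neighbors F' d = {u}) = v"
        using nu nv by (intro some_equality) auto
      moreover have "y u \<noteq> bf u" using yM uM unfolding M_def by blast
      ultimately have "y u \<noteq> inv (g u) \<otimes> g v" unfolding bf_def by simp
      then have ne: "g u \<otimes> y u \<noteq> g v" using eq_solve gC yC uv(3) by simp
      have xv: "x' {u, v} \<in> carrier G" using x'C uv(1) by blast
      have "wt G F' g' x' u = (g u \<otimes> y u) \<otimes> x' {u, v}"
        unfolding wt_def nu g'_def using uv(3) xv by (simp add: insert_commute)
      moreover have "wt G F' g' x' v = g v \<otimes> x' {u, v}"
        unfolding wt_def nv g'_def using vC xv by simp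
      moreover have "g u \<otimes> y u \<in> carrier G" "g v \<in> carrier G" using gC yC uv(3) by auto
      ultimately show ?thesis using ne xv r_cancel by metis
    qed
    have isol_sym: "isol H a b = isol H b a" for H a b unfolding isol_def by auto
    have good: "\<forall>u v. {u, v} \<in> F \<longrightarrow> \<not> isol F u v \<longrightarrow> wt G F g x u \<noteq> wt G F g x v"
    proof (intro allI impI)
      fix u v assume uv: "{u, v} \<in> F" and ni: "\<not> isol F u v"
      show "wt G F g x u \<noteq> wt G F g x v"
      proof (cases "u = r")
        case True
        then show ?thesis using goodr[of v] uv ni by (simp add: insert_commute)
      next
        case ur: False
        show ?thesis
        proof (cases "v = r")
          case True
          then show ?thesis using goodr[of u] uv ni isol_sym[of F u v] by metis
        next
          case vr: False
          have uvF': "{u, v} \<in> F'" unfolding F'_def using uv ur vr by simp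
          have eqs: "wt G F g x u = wt G F' g' x' u" "wt G F g x v = wt G F' g' x' v"
            using W1 ur vr by auto
          show ?thesis
          proof (cases "isol F' u v")
            case True
            have "u \<in> C \<or> v \<in> C"
            proof (rule ccontr)
              assume "\<not> (u \<in> C \<or> v \<in> C)"
              then have "neighbors F u = neighbors F' u" "neighbors F v = neighbors F' v"
                using N3 ur vr by auto
              then show False using True ni unfolding isol_def by simp
            qed
            then show ?thesis
            proof
              assume "u \<in> C"
              then show ?thesis using good'[OF uvF' True] eqs by simp
            next
              assume vC: "v \<in> C"
              have "{v, u} \<in> F'" using uvF' by (simp add: insert_commute)
              moreover have "isol F' v u" using True isol_sym by metis
              ultimately show ?thesis using good'[OF _ _ vC] eqs by metis
            qed
          next
            case False
            then show ?thesis using x'good uvF' eqs by simp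
          qed
        qed
      qed
    qed
    have roots: "\<forall>v\<in>R. wt G F g x v \<noteq> P v"
    proof
      fix v assume v: "v \<in> R"
      show "wt G F g x v \<noteq> P v"
      proof (cases "v = r")
        case True
        then show ?thesis using yR v W2 unfolding W_def by simp
      next
        case False
        then have vC: "v \<notin> C" using RnotC v by simp
        then have "v \<notin> M" "v \<in> R'" unfolding M_def R'_def using v False by auto
        then have "wt G F' g' x' v \<noteq> P v" using x'R unfolding P'_def by auto
        then show ?thesis using W1[OF False] by simp
      qed
    qed
    show ?thesis using labels good roots by blast
  qed
qed

end

definition Dz :: "('g, 'm) monoid_scheme \<Rightarrow> 'v set set \<Rightarrow> 'v set set \<Rightarrow> ('v set \<Rightarrow> 'g) \<Rightarrow> 'v \<Rightarrow> 'g" where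
  "Dz K E Fi z w = finprod K (\<lambda>t. z {t, w}) (neighbors E w - neighbors Fi w)"

context comm_group begin

lemma forest_label:
  assumes c4: "4 \<le> card (carrier G)" and "finite F" "sgraph F" "\<not> has_cycle F" "\<forall>v. g v \<in> carrier G"
  shows "\<exists>x. (\<forall>e\<in>F. x e \<in> carrier G \<and> x e \<noteq> \<one>) \<and>
        (\<forall>u v. {u, v} \<in> F \<longrightarrow> \<not> isol F u v \<longrightarrow> wt G F g x u \<noteq> wt G F g x v)"
  using claim[OF c4 assms(2,3,4), of "{}" g "\<lambda>_. \<one>"] assms(5) by auto

lemma Dz_update:
  assumes finE: "finite E" and sgE: "sgraph E" and z: "\<forall>e. z e \<in> carrier G" and d: "\<delta> \<in> carrier G"
    and xa: "x \<noteq> a" and xN: "x \<in> neighbors E a - neighbors Fi a" and aN: "a \<in> neighbors E x - neighbors Fi x"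
  shows "Dz G E Fi (z({x, a} := z {x, a} \<otimes> \<delta>)) w = Dz G E Fi z w \<otimes> (if w = a \<or> w = x then \<delta> else \<one>)"
proof -
  define N where "N = neighbors E w - neighbors Fi w"
  have finN: "finite N" unfolding N_def using fin_nb[OF finE sgE] by simp
  define h where "h t = (if {t, w} = {x, a} then \<delta> else \<one>)" for t
  have hC: "h \<in> N \<rightarrow> carrier G" unfolding h_def using d by auto
  have zC: "(\<lambda>t. z {t, w}) \<in> N \<rightarrow> carrier G" using z by auto
  have "Dz G E Fi (z({x, a} := z {x, a} \<otimes> \<delta>)) w = finprod G (\<lambda>t. z {t, w} \<otimes> h t) N"
    unfolding Dz_def N_def[symmetric]
  proof (rule finprod_cong')
    show "N = N" ..
    show "(\<lambda>t. z {t, w} \<otimes> h t) \<in> N \<rightarrow> carrier G" using z hC by auto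
    fix i assume "i \<in> N"
    have zc: "z {i, w} \<in> carrier G" using z by blast
    show "(z({x, a} := z {x, a} \<otimes> \<delta>)) {i, w} = z {i, w} \<otimes> h i"
      unfolding h_def using zc by auto
  qed
  also have "\<dots> = finprod G (\<lambda>t. z {t, w}) N \<otimes> finprod G h N"
    using zC hC by simp
  also have "finprod G h N = (if w = a \<or> w = x then \<delta> else \<one>)"
  proof (cases "w = a")
    case True
    have "finprod G h N = finprod G (\<lambda>t. if t = x then \<delta> else \<one>) N"
      by (rule finprod_cong) (use True xa d in \<open>auto simp: h_def Pi_def doubleton_eq_iff\<close>)
    also have "\<dots> = \<delta>" using finprod_singleton_swap[of x N "\<lambda>_. \<delta>"] xN True finN d unfolding N_def by auto
    finally show ?thesis using True by simp
  next
    case wa: False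
    show ?thesis
    proof (cases "w = x")
      case True
      have "finprod G h N = finprod G (\<lambda>t. if t = a then \<delta> else \<one>) N"
        by (rule finprod_cong) (use True xa d in \<open>auto simp: h_def Pi_def doubleton_eq_iff\<close>)
      also have "\<dots> = \<delta>" using finprod_singleton_swap[of a N "\<lambda>_. \<delta>"] aN True finN d unfolding N_def by auto
      finally show ?thesis using True by simp
    next
      case False
      have "finprod G h N = finprod G (\<lambda>t. \<one>) N"
        by (rule finprod_cong) (use False wa in \<open>auto simp: h_def Pi_def doubleton_eq_iff\<close>)
      then show ?thesis using False wa by simp
    qed
  qed
  finally show ?thesis unfolding Dz_def N_def by simp
qed

lemma match_lemma:
  assumes c4: "4 \<le> card (carrier G)" and finE: "finite E" and sgE: "sgraph E" and sub: "Fi \<subseteq> E"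
    and noiso: "\<not> has_isolated_edge E"
  shows "\<exists>z. (\<forall>e. z e \<in> carrier G) \<and> (\<forall>u v. {u, v} \<in> Fi \<longrightarrow> isol Fi u v \<longrightarrow> Dz G E Fi z u \<noteq> Dz G E Fi z v)"
proof -
  have finFi: "finite Fi" using finE sub finite_subset by blast
  have loop: "\<And>u. {u, u} \<notin> E" using sgraph_loop[OF sgE] .
  have DzC: "Dz G E Fi z w \<in> carrier G" if "\<forall>e. z e \<in> carrier G" for z w
    unfolding Dz_def using that by (intro finprod_closed) auto
  have main: "S \<subseteq> Fi \<Longrightarrow> \<exists>z. (\<forall>e. z e \<in> carrier G) \<and> (\<forall>u v. {u, v} \<in> S \<longrightarrow> isol Fi u v \<longrightarrow> Dz G E Fi z u \<noteq> Dz G E Fi z v)"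
    if "finite S" for S
    using that
  proof (induction S rule: finite_induct)
    case empty
    show ?case by (intro exI[of _ "\<lambda>_. \<one>"]) simp
  next
    case (insert m S)
    obtain z where z: "\<forall>e. z e \<in> carrier G"
      and zS: "\<forall>u v. {u, v} \<in> S \<longrightarrow> isol Fi u v \<longrightarrow> Dz G E Fi z u \<noteq> Dz G E Fi z v"
      using insert.IH insert.prems by auto
    show ?case
    proof (cases "\<exists>u v. m = {u, v} \<and> isol Fi u v")
      case False
      have "\<forall>u v. {u, v} \<in> insert m S \<longrightarrow> isol Fi u v \<longrightarrow> Dz G E Fi z u \<noteq> Dz G E Fi z v"
        using zS False by auto
      then show ?thesis using z by blast
    next
      case True
      then obtain u0 v0 where m0: "m = {u0, v0}" "isol Fi u0 v0" by blast
      have mE: "{u0, v0} \<in> E" using insert.prems m0 sub by auto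
      have "\<not> (neighbors E u0 = {v0} \<and> neighbors E v0 = {u0})"
        using noiso mE unfolding has_isolated_edge_def by blast
      moreover have "v0 \<in> neighbors E u0" "u0 \<in> neighbors E v0" using mE unfolding neighbors_def
        by (auto simp: insert_commute)
      ultimately have "\<exists>x. (x \<in> neighbors E u0 \<and> x \<noteq> v0) \<or> (x \<in> neighbors E v0 \<and> x \<noteq> u0)" by blast
      then obtain a b x where ab: "m = {a, b}" "isol Fi a b" and xE: "x \<in> neighbors E a" and xb: "x \<noteq> b"
        using m0 by (metis insert_commute isol_def)
      have nFa: "neighbors Fi a = {b}" and nFb: "neighbors Fi b = {a}" using ab(2) unfolding isol_def by auto
      have xFa: "x \<notin> neighbors Fi a" using nFa xb by simp
      have xaE: "{x, a} \<in> E" using xE unfolding neighbors_def by simp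
      have xa: "x \<noteq> a" using xaE loop by auto
      have aE: "a \<in> neighbors E x" using xaE unfolding neighbors_def by (simp add: insert_commute)
      have aF: "a \<notin> neighbors Fi x"
      proof
        assume "a \<in> neighbors Fi x"
        then have "x \<in> neighbors Fi a" unfolding neighbors_def by (simp add: insert_commute)
        then show False using xFa by simp
      qed
      have ba: "b \<noteq> a" using nFa unfolding neighbors_def using sub loop by auto
      define D where "D = Dz G E Fi z"
      have DC: "D w \<in> carrier G" for w unfolding D_def using DzC z by simp
      define y0 where "y0 = (SOME y. neighbors Fi x = {y})"
      obtain \<delta> where d: "\<delta> \<in> carrier G" "\<delta> \<noteq> \<one>" "\<delta> \<noteq> inv (D a) \<otimes> D b" "\<delta> \<noteq> inv (D x) \<otimes> D y0"
        using avoid3[OF c4] by blast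
      define z' where "z' = z({x, a} := z {x, a} \<otimes> \<delta>)"
      have z'C: "\<forall>e. z' e \<in> carrier G" unfolding z'_def using z d by auto
      have D': "Dz G E Fi z' w = D w \<otimes> (if w = a \<or> w = x then \<delta> else \<one>)" for w
        unfolding z'_def D_def using Dz_update[OF finE sgE z d(1) xa _ _] xE xFa aE aF by simp
      have good: "Dz G E Fi z' s \<noteq> Dz G E Fi z' t"
        if st: "{s, t} \<in> insert m S" "isol Fi s t" for s t
      proof (cases "{s, t} = m")
        case True
        then have "(s = a \<and> t = b) \<or> (s = b \<and> t = a)" using ab(1) by (auto simp: doubleton_eq_iff)
        moreover have "D a \<otimes> \<delta> \<noteq> D b" using d DC eq_solve by simp
        moreover have "Dz G E Fi z' a = D a \<otimes> \<delta>" using D'[of a] by simp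
        moreover have "Dz G E Fi z' b = D b" using D'[of b] xb ba DC by simp
        ultimately show ?thesis by metis
      next
        case False
        then have stS: "{s, t} \<in> S" using st(1) by simp
        have Dst: "D s \<noteq> D t" using zS stS st(2) unfolding D_def by blast
        have nFs: "neighbors Fi s = {t}" and nFt: "neighbors Fi t = {s}" using st(2) unfolding isol_def by auto
        have sa: "s \<noteq> a"
        proof
          assume "s = a"
          then have "t = b" using nFs nFa by simp
          then show False using False ab(1) \<open>s = a\<close> by simp
        qed
        have ta: "t \<noteq> a"
        proof
          assume "t = a"
          then have "s = b" using nFt nFa by simp
          then show False using False ab(1) \<open>t = a\<close> by (simp add: insert_commute)
        qed
        show ?thesis
        proof (cases "s = x")
          case True
          have "y0 = t" unfolding y0_def using nFs True by simp
          then have "D s \<otimes> \<delta> \<noteq> D t" using d DC eq_solve True by simp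
          moreover have "t \<noteq> x" using True st(1) insert.prems sub loop by auto
          ultimately show ?thesis using D' True ta DC by simp
        next
          case sx: False
          show ?thesis
          proof (cases "t = x")
            case True
            have "y0 = s" unfolding y0_def using nFt True by simp
            then have "D t \<otimes> \<delta> \<noteq> D s" using d DC eq_solve True by simp
            moreover have "Dz G E Fi z' t = D t \<otimes> \<delta>" using D'[of t] True by simp
            moreover have "Dz G E Fi z' s = D s" using D'[of s] sa sx DC by simp
            ultimately show ?thesis by metis
          next
            case False
            then show ?thesis using D' sa ta sx Dst DC by simp
          qed
        qed
      qed
      show ?thesis using z'C good by blast
    qed
  qed
  show ?thesis using main[OF finFi] by blast
qed

end

lemma hom_finprod_gen:
  assumes A: "comm_group A" and B: "comm_group B" and h: "\<phi> \<in> hom A B" and fin: "finite S"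
    and F: "F \<in> S \<rightarrow> carrier A"
  shows "\<phi> (finprod A F S) = finprod B (\<lambda>s. \<phi> (F s)) S"
  using fin F
proof (induction S rule: finite_induct)
  case empty
  have "group A" "group B" using A B by (auto simp: comm_group_def)
  then show ?case using hom_one[OF h] by (simp add: comm_monoid.finprod_empty[OF comm_group.axioms(1)[OF A]]
      comm_monoid.finprod_empty[OF comm_group.axioms(1)[OF B]])
next
  case (insert a S)
  interpret A: comm_group A by (rule A)
  interpret B: comm_group B by (rule B)
  have Fa: "F a \<in> carrier A" and FS: "F \<in> S \<rightarrow> carrier A" using insert.prems by auto
  have hC: "\<phi> x \<in> carrier B" if "x \<in> carrier A" for x using h that unfolding hom_def by auto
  have "\<phi> (finprod A F (insert a S)) = \<phi> (F a \<otimes>\<^bsub>A\<^esub> finprod A F S)"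
    using A.finprod_insert[OF insert.hyps(1,2) FS Fa] by simp
  also have "\<dots> = \<phi> (F a) \<otimes>\<^bsub>B\<^esub> \<phi> (finprod A F S)"
    using hom_mult[OF h Fa A.finprod_closed[OF FS]] .
  also have "\<dots> = \<phi> (F a) \<otimes>\<^bsub>B\<^esub> finprod B (\<lambda>s. \<phi> (F s)) S" using insert.IH[OF FS] by simp
  also have "\<dots> = finprod B (\<lambda>s. \<phi> (F s)) (insert a S)"
    using B.finprod_insert[OF insert.hyps(1,2)] FS Fa hC by (auto simp: Pi_def)
  finally show ?case .
qed

lemma one_class_no_cycle:
  assumes "\<forall>e1\<in>F. \<forall>e2\<in>F. e1 = e2"
  shows "\<not> has_cycle F"
proof
  assume "has_cycle F"
  then obtain vs where vs1: "length vs \<ge> 3" and vs2: "distinct vs"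
    and vs3: "\<forall>i < length vs - 1. {vs ! i, vs ! (i+1)} \<in> F"
    unfolding has_cycle_def by (elim exE conjE) simp
  have l0: "0 < length vs - 1" and l1: "1 < length vs - 1" using vs1 by auto
  have e0: "{vs ! 0, vs ! 1} \<in> F" using vs3[rule_format, OF l0] by simp
  have e1: "{vs ! 1, vs ! 2} \<in> F" using vs3[rule_format, OF l1] by (simp add: numeral_2_eq_2)
  have eq: "{vs ! 0, vs ! 1} = {vs ! 1, vs ! 2}" using assms[rule_format, OF e0 e1] .
  have vsne: "vs \<noteq> []" using vs1 by auto
  have "vs ! 0 \<noteq> vs ! 2" using nth_eq_iff_index_eq[OF vs2, of 0 2] vs1 vsne by simp
  moreover have "vs ! 0 \<noteq> vs ! 1" using nth_eq_iff_index_eq[OF vs2, of 0 1] vs1 vsne by simp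
  ultimately show False using eq by (simp add: doubleton_eq_iff)
qed

lemma decomp_exists:
  assumes fin: "finite E"
  shows "forest_decomposable E (card E)"
proof -
  obtain f where f: "bij_betw f E {0..<card E}" using ex_bij_betw_finite_nat[OF fin] by blast
  have lt: "\<forall>e\<in>E. f e < card E" using f unfolding bij_betw_def by auto
  have inj: "inj_on f E" using f unfolding bij_betw_def by simp
  have fo: "forest {e \<in> E. f e = i}" for i
  proof -
    have "\<forall>e1\<in>{e \<in> E. f e = i}. \<forall>e2\<in>{e \<in> E. f e = i}. e1 = e2"
      using inj unfolding inj_on_def by simp
    then show ?thesis unfolding forest_def by (rule one_class_no_cycle)
  qed
  show ?thesis unfolding forest_decomposable_def
    by (rule exI[of _ f]) (simp add: lt fo)
qed

lemma get_decomp: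
  assumes fin: "finite E" and arb: "arboricity E \<le> a"
  shows "\<exists>c. (\<forall>e\<in>E. c e < a) \<and> (\<forall>i<a. forest {e \<in> E. c e = i})"
proof -
  have "forest_decomposable E (arboricity E)"
    unfolding arboricity_def by (rule LeastI[of _ "card E"]) (rule decomp_exists[OF fin])
  then obtain c where c: "\<forall>e\<in>E. c e < arboricity E" "\<forall>i < arboricity E. forest {e \<in> E. c e = i}"
    unfolding forest_decomposable_def by blast
  have "forest {e \<in> E. c e = i}" if "i < a" for i
  proof (cases "i < arboricity E")
    case True then show ?thesis using c by blast
  next
    case False
    then have e: "{e \<in> E. c e = i} = {}" using c(1) by auto
    show ?thesis unfolding forest_def e using one_class_no_cycle[of "{}"] by simp
  qed
  then show ?thesis using c arb by (intro exI[of _ c]) auto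
qed

theorem corollary5:
  fixes V :: "'v set" and E :: "'v set set" and a :: nat
    and G :: "('g, 'm) monoid_scheme"
    and Gs :: "nat \<Rightarrow> ('h, 'n) monoid_scheme"
  assumes "a > 0"
    and "simple_graph V E"
    and "arboricity E \<le> a"
    and "\<not> has_isolated_edge E"
    and "comm_group G"
    and "\<And>i. i < a \<Longrightarrow> comm_group (Gs i)"
    and "\<And>i. i < a \<Longrightarrow> card (carrier (Gs i)) \<ge> 4"
    and "G \<cong> product_group {..<a} Gs"
  shows "\<exists>f. (\<forall>e\<in>E. f e \<in> carrier G - {\<one>\<^bsub>G\<^esub>}) \<and>
             (\<forall>u v. {u, v} \<in> E \<longrightarrow> weight G E f u \<noteq> weight G E f v)"
proof -
  note sg = assms(2) and arb = assms(3) and noiso = assms(4) and cG = assms(5)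
    and cGs = assms(6) and c4 = assms(7) and isoG = assms(8)
  define P where "P = product_group {..<a} Gs"
  have finV: "finite V" using sg unfolding simple_graph_def by simp
  have EV: "E \<subseteq> Pow V" using sg unfolding simple_graph_def by auto
  have finE: "finite E" using finite_subset[OF EV] finV by simp
  have sgE: "sgraph E" using sg unfolding simple_graph_def sgraph_def by blast
  obtain c where c: "\<forall>e\<in>E. c e < a" "\<forall>i<a. forest {e \<in> E. c e = i}"
    using get_decomp[OF finE arb] by blast
  define Fi where "Fi i = {e \<in> E. c e = i}" for i
  have FiE: "Fi i \<subseteq> E" for i unfolding Fi_def by blast
  have finFi: "finite (Fi i)" for i using finE FiE finite_subset by blast
  have sgFi: "sgraph (Fi i)" for i using sgraph_mono[OF sgE FiE] .
  have acFi: "\<not> has_cycle (Fi i)" if "i < a" for i using c(2) that unfolding Fi_def forest_def by blast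
  have "\<forall>i. \<exists>z. i < a \<longrightarrow> (\<forall>e. z e \<in> carrier (Gs i)) \<and>
      (\<forall>u v. {u, v} \<in> Fi i \<longrightarrow> isol (Fi i) u v \<longrightarrow> Dz (Gs i) E (Fi i) z u \<noteq> Dz (Gs i) E (Fi i) z v)"
  proof
    fix i
    show "\<exists>z. i < a \<longrightarrow> (\<forall>e. z e \<in> carrier (Gs i)) \<and>
      (\<forall>u v. {u, v} \<in> Fi i \<longrightarrow> isol (Fi i) u v \<longrightarrow> Dz (Gs i) E (Fi i) z u \<noteq> Dz (Gs i) E (Fi i) z v)"
    proof (cases "i < a")
      case True
      then show ?thesis using comm_group.match_lemma[OF cGs[OF True] c4[OF True] finE sgE FiE noiso] by blast
    qed simp
  qed
  from choice[OF this] obtain Z where Z: "\<forall>i. i < a \<longrightarrow> (\<forall>e. Z i e \<in> carrier (Gs i)) \<and>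
      (\<forall>u v. {u, v} \<in> Fi i \<longrightarrow> isol (Fi i) u v \<longrightarrow> Dz (Gs i) E (Fi i) (Z i) u \<noteq> Dz (Gs i) E (Fi i) (Z i) v)"
    by blast
  define g where "g i v = Dz (Gs i) E (Fi i) (Z i) v" for i v
  have gC: "\<forall>v. g i v \<in> carrier (Gs i)" if i: "i < a" for i
  proof
    fix v
    interpret K: comm_group "Gs i" using cGs[OF i] .
    show "g i v \<in> carrier (Gs i)" unfolding g_def Dz_def using Z i by (intro K.finprod_closed) auto
  qed
  have "\<forall>i. \<exists>x. i < a \<longrightarrow> (\<forall>e\<in>Fi i. x e \<in> carrier (Gs i) \<and> x e \<noteq> one (Gs i)) \<and>
        (\<forall>u v. {u, v} \<in> Fi i \<longrightarrow> \<not> isol (Fi i) u v \<longrightarrow> wt (Gs i) (Fi i) (g i) x u \<noteq> wt (Gs i) (Fi i) (g i) x v)"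
  proof
    fix i
    show "\<exists>x. i < a \<longrightarrow> (\<forall>e\<in>Fi i. x e \<in> carrier (Gs i) \<and> x e \<noteq> one (Gs i)) \<and>
        (\<forall>u v. {u, v} \<in> Fi i \<longrightarrow> \<not> isol (Fi i) u v \<longrightarrow> wt (Gs i) (Fi i) (g i) x u \<noteq> wt (Gs i) (Fi i) (g i) x v)"
    proof (cases "i < a")
      case True
      then show ?thesis
        using comm_group.forest_label[OF cGs[OF True] c4[OF True] finFi sgFi acFi[OF True] gC[OF True]] by blast
    qed simp
  qed
  from choice[OF this] obtain Xl where Xl: "\<forall>i. i < a \<longrightarrow> (\<forall>e\<in>Fi i. Xl i e \<in> carrier (Gs i) \<and> Xl i e \<noteq> one (Gs i)) \<and>
        (\<forall>u v. {u, v} \<in> Fi i \<longrightarrow> \<not> isol (Fi i) u v \<longrightarrow> wt (Gs i) (Fi i) (g i) (Xl i) u \<noteq> wt (Gs i) (Fi i) (g i) (Xl i) v)"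
    by blast
  obtain h where h: "h \<in> iso G P" using isoG unfolding is_iso_def P_def by blast
  have hom: "h \<in> hom G P" and bij: "bij_betw h (carrier G) (carrier P)" using h unfolding iso_def by auto
  have grpG: "group G" using cG by (simp add: comm_group_def)
  have grpP: "group P" unfolding P_def using cGs by (intro product_group) (simp add: comm_group_def)
  define T where "T e = (\<lambda>i\<in>{..<a}. if c e = i then Xl i e else Z i e)" for e
  have TP: "T e \<in> carrier P" if e: "e \<in> E" for e
  proof -
    have "T e i \<in> carrier (Gs i)" if i: "i \<in> {..<a}" for i
    proof (cases "c e = i")
      case True
      then have "e \<in> Fi i" unfolding Fi_def using e by simp
      then show ?thesis using Xl i True unfolding T_def by auto
    next
      case False
      then show ?thesis using Z i unfolding T_def by auto
    qed
    then show ?thesis unfolding P_def T_def by (auto simp: PiE_iff)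
  qed
  define f where "f e = inv_into (carrier G) h (T e)" for e
  have img: "h ` carrier G = carrier P" using bij unfolding bij_betw_def by simp
  have hf: "h (f e) = T e" if "e \<in> E" for e
    unfolding f_def using TP[OF that] img by (simp add: f_inv_into_f)
  have fC: "f e \<in> carrier G" if "e \<in> E" for e
    unfolding f_def using inv_into_into[of "T e" h "carrier G"] TP[OF that] img by simp
  have f1: "f e \<noteq> \<one>\<^bsub>G\<^esub>" if e: "e \<in> E" for e
  proof
    assume f1: "f e = \<one>\<^bsub>G\<^esub>"
    have "h (\<one>\<^bsub>G\<^esub>) = \<one>\<^bsub>P\<^esub>" using hom_one[OF hom grpG grpP] .
    then have Te: "T e = (\<lambda>i\<in>{..<a}. \<one>\<^bsub>Gs i\<^esub>)" using hf[OF e] f1 unfolding P_def by simp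
    have ce: "c e < a" using c(1) e by blast
    have "T e (c e) = Xl (c e) e" unfolding T_def using ce by simp
    moreover have "T e (c e) = \<one>\<^bsub>Gs (c e)\<^esub>" using Te ce by simp
    moreover have "e \<in> Fi (c e)" unfolding Fi_def using e by simp
    moreover have "\<forall>e'\<in>Fi (c e). Xl (c e) e' \<in> carrier (Gs (c e)) \<and> Xl (c e) e' \<noteq> one (Gs (c e))"
      using Xl[rule_format, OF ce] by (rule conjunct1)
    ultimately show False by auto
  qed
  have proj: "(\<lambda>x. h x i) \<in> hom G (Gs i)" if i: "i < a" for i
  proof -
    have "h x i \<in> carrier (Gs i)" if "x \<in> carrier G" for x
      using hom that i unfolding hom_def P_def by (auto simp: PiE_iff)
    moreover have "h (x \<otimes>\<^bsub>G\<^esub> y) i = h x i \<otimes>\<^bsub>Gs i\<^esub> h y i" if "x \<in> carrier G" "y \<in> carrier G" for x y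
      using hom_mult[OF hom that] i unfolding P_def by simp
    ultimately show ?thesis unfolding hom_def by auto
  qed
  have wsplit: "h (weight G E f v) i = wt (Gs i) (Fi i) (g i) (Xl i) v" if i: "i < a" for i v
  proof -
    interpret K: comm_group "Gs i" using cGs[OF i] .
    have finN: "finite (neighbors E v)" using fin_nb[OF finE sgE] .
    have fPi: "(\<lambda>u. f {u, v}) \<in> neighbors E v \<rightarrow> carrier G" using fC unfolding neighbors_def by auto
    have "h (weight G E f v) i = finprod (Gs i) (\<lambda>u. h (f {u, v}) i) (neighbors E v)"
      unfolding weight_def using hom_finprod_gen[OF cG cGs[OF i] proj[OF i] finN fPi] by simp
    also have "\<dots> = finprod (Gs i) (\<lambda>u. T {u, v} i) (neighbors E v)"
    proof (rule K.finprod_cong')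
      show "neighbors E v = neighbors E v" ..
      show "(\<lambda>u. T {u, v} i) \<in> neighbors E v \<rightarrow> carrier (Gs i)"
        using TP i unfolding neighbors_def P_def by (auto simp: PiE_iff)
      fix u assume "u \<in> neighbors E v"
      then show "h (f {u, v}) i = T {u, v} i" using hf unfolding neighbors_def by simp
    qed
    also have "\<dots> = finprod (Gs i) (\<lambda>u. T {u, v} i) (neighbors (Fi i) v) \<otimes>\<^bsub>Gs i\<^esub>
                     finprod (Gs i) (\<lambda>u. T {u, v} i) (neighbors E v - neighbors (Fi i) v)"
    proof -
      have sub: "neighbors (Fi i) v \<subseteq> neighbors E v" using FiE unfolding neighbors_def by blast
      have TPi: "(\<lambda>u. T {u, v} i) \<in> neighbors E v \<rightarrow> carrier (Gs i)"
        using TP i unfolding neighbors_def P_def by (auto simp: PiE_iff)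
      have fin1: "finite (neighbors (Fi i) v)" using finN sub by (rule finite_subset[rotated])
      have fin2: "finite (neighbors E v - neighbors (Fi i) v)" using finN by simp
      have TPi1: "(\<lambda>u. T {u, v} i) \<in> neighbors (Fi i) v \<rightarrow> carrier (Gs i)" using TPi sub by (rule Pi_anti_mono[THEN subsetD, rotated])
      have TPi2: "(\<lambda>u. T {u, v} i) \<in> neighbors E v - neighbors (Fi i) v \<rightarrow> carrier (Gs i)" using TPi by (rule Pi_anti_mono[THEN subsetD, rotated]) blast
      have un: "neighbors (Fi i) v \<union> (neighbors E v - neighbors (Fi i) v) = neighbors E v" using sub by blast
      have "finprod (Gs i) (\<lambda>u. T {u, v} i) (neighbors (Fi i) v \<union> (neighbors E v - neighbors (Fi i) v)) =
        finprod (Gs i) (\<lambda>u. T {u, v} i) (neighbors (Fi i) v) \<otimes>\<^bsub>Gs i\<^esub>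
                     finprod (Gs i) (\<lambda>u. T {u, v} i) (neighbors E v - neighbors (Fi i) v)"
        by (rule K.finprod_Un_disjoint[OF fin1 fin2 _ TPi1 TPi2]) blast
      then show ?thesis unfolding un .
    qed
    also have "finprod (Gs i) (\<lambda>u. T {u, v} i) (neighbors (Fi i) v) = finprod (Gs i) (\<lambda>u. Xl i {u, v}) (neighbors (Fi i) v)"
    proof (rule K.finprod_cong')
      show "neighbors (Fi i) v = neighbors (Fi i) v" ..
      show "(\<lambda>u. Xl i {u, v}) \<in> neighbors (Fi i) v \<rightarrow> carrier (Gs i)"
        using Xl i unfolding neighbors_def by auto
      fix u assume "u \<in> neighbors (Fi i) v"
      then have "c {u, v} = i" unfolding neighbors_def Fi_def by simp
      then show "T {u, v} i = Xl i {u, v}" unfolding T_def using i by simp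
    qed
    also have "finprod (Gs i) (\<lambda>u. T {u, v} i) (neighbors E v - neighbors (Fi i) v) = g i v"
      unfolding g_def Dz_def
    proof (rule K.finprod_cong')
      show "neighbors E v - neighbors (Fi i) v = neighbors E v - neighbors (Fi i) v" ..
      show "(\<lambda>u. Z i {u, v}) \<in> neighbors E v - neighbors (Fi i) v \<rightarrow> carrier (Gs i)"
        using Z i by auto
      fix u assume "u \<in> neighbors E v - neighbors (Fi i) v"
      then have "c {u, v} \<noteq> i" unfolding neighbors_def Fi_def by simp
      then show "T {u, v} i = Z i {u, v}" unfolding T_def using i by simp
    qed
    finally have eq: "h (weight G E f v) i = finprod (Gs i) (\<lambda>u. Xl i {u, v}) (neighbors (Fi i) v) \<otimes>\<^bsub>Gs i\<^esub> g i v" .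
    have XPi: "(\<lambda>u. Xl i {u, v}) \<in> neighbors (Fi i) v \<rightarrow> carrier (Gs i)"
      using Xl i unfolding neighbors_def by auto
    have XC: "finprod (Gs i) (\<lambda>u. Xl i {u, v}) (neighbors (Fi i) v) \<in> carrier (Gs i)"
      using K.finprod_closed[OF XPi] .
    have gv: "g i v \<in> carrier (Gs i)" using gC[OF i] by blast
    show ?thesis unfolding wt_def eq using K.m_comm[OF XC gv] .
  qed
  have main: "weight G E f u \<noteq> weight G E f v" if uv: "{u, v} \<in> E" for u v
  proof -
    define i where "i = c {u, v}"
    have i: "i < a" unfolding i_def using c(1) uv by blast
    have uvF: "{u, v} \<in> Fi i" unfolding Fi_def i_def using uv by simp
    interpret K: comm_group "Gs i" using cGs[OF i] .
    have "wt (Gs i) (Fi i) (g i) (Xl i) u \<noteq> wt (Gs i) (Fi i) (g i) (Xl i) v"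
    proof (cases "isol (Fi i) u v")
      case False
      then show ?thesis using Xl i uvF by blast
    next
      case True
      have nu: "neighbors (Fi i) u = {v}" and nv: "neighbors (Fi i) v = {u}" using True unfolding isol_def by auto
      have gne: "g i u \<noteq> g i v" unfolding g_def using Z i uvF True by blast
      have xC: "Xl i {u, v} \<in> carrier (Gs i)" using Xl i uvF by blast
      have "wt (Gs i) (Fi i) (g i) (Xl i) u = g i u \<otimes>\<^bsub>Gs i\<^esub> Xl i {u, v}"
        unfolding wt_def nu using xC by (simp add: insert_commute)
      moreover have "wt (Gs i) (Fi i) (g i) (Xl i) v = g i v \<otimes>\<^bsub>Gs i\<^esub> Xl i {u, v}"
        unfolding wt_def nv using xC by simp
      ultimately show ?thesis using gne xC gC[OF i] K.r_cancel by metis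
    qed
    then show ?thesis using wsplit[OF i] by metis
  qed
  show ?thesis using fC f1 main by blast
qed

end
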